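(* Let $\Omega\subset\mathbb{R}^n$ be a convex body and fix an incentre $c$ of $\Omega$. For any $\varepsilon\in[0,\mathrm{In}(\Omega)]$, $$L_\varepsilon(\Omega)\subset \Omega\setminus \mathrm{Int}\Big[\Big(1-\frac{\varepsilon}{\mathrm{In}(\Omega)}\Big)\cdot\Omega\Big],$$ where for $\lambda\ge 0$, $\lambda\cdot\Omega=\{c+\lambda(x-c): x\in\Omega\}$ denotes the enlargement of $\Omega$ with scale factor $\lambda$ about $c$.
   Context: A convex body is a convex, closed subset of $\mathbb{R}^n$ with non-empty interior. $\mathrm{In}(\Omega)$ is the inradius of $\Omega$: the largest distance from $\partial\Omega$ of a point of $\Omega$ (equivalently the radius of the largest ball contained in $\Omega$). An incentre is a point of $\Omega$ at maximal distance $\mathrm{In}(\Omega)$ from $\partial\Omega$. The $\varepsilon$-inner neighbourhood is $L_\varepsilon(\Omega)=\{x\in\Omega:\|x-y\|\le\varepsilon\text{ for some }y\in\partial\Omega\}$. $\mathrm{Int}$ denotes interior. *)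

theory Defs
  imports "HOL-Analysis.Analysis"
begin

definition convex_body :: "'a::euclidean_space set \<Rightarrow> bool" where
  "convex_body \<Omega> \<longleftrightarrow> convex \<Omega> \<and> closed \<Omega> \<and> interior \<Omega> \<noteq> {}"

definition inradius :: "'a::euclidean_space set \<Rightarrow> real" where
  "inradius \<Omega> = (SUP x\<in>\<Omega>. infdist x (frontier \<Omega>))"

definition is_incentre :: "'a::euclidean_space set \<Rightarrow> 'a \<Rightarrow> bool" where
  "is_incentre \<Omega> c \<longleftrightarrow> c \<in> \<Omega> \<and> (\<forall>x\<in>\<Omega>. infdist x (frontier \<Omega>) \<le> infdist c (frontier \<Omega>))"

definition inner_nbhd :: "real \<Rightarrow> 'a::euclidean_space set \<Rightarrow> 'a set" where
  "inner_nbhd \<epsilon> \<Omega> = {x\<in>\<Omega>. \<exists>y\<in>frontier \<Omega>. norm (x - y) \<le> \<epsilon>}"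

definition enlarge :: "'a::euclidean_space \<Rightarrow> real \<Rightarrow> 'a set \<Rightarrow> 'a set" where
  "enlarge c t \<Omega> = (\<lambda>x. c + t *\<^sub>R (x - c)) ` \<Omega>"

end

theory Submission
  imports Defs
begin

lemma enlarge_decomp: "enlarge c t S = (+) c ` ((\<lambda>x. t *\<^sub>R x) ` ((\<lambda>x. x - c) ` S))"
  unfolding enlarge_def by (simp add: image_image)

lemma interior_enlarge:
  fixes S :: "'a::euclidean_space set"
  assumes "t \<noteq> 0"
  shows "interior (enlarge c t S) = enlarge c t (interior S)"
proof -
  have lin: "linear (\<lambda>x::'a. t *\<^sub>R x)" by (simp add: linear_scaleR)
  have inj: "inj (\<lambda>x::'a. t *\<^sub>R x)" using assms by (simp add: inj_on_def)
  show ?thesis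
    unfolding enlarge_decomp interior_translation
      interior_injective_linear_image[OF lin inj] interior_translation_subtract ..
qed

theorem mainTheorem2:
  fixes \<Omega> :: "'a::euclidean_space set" and c :: 'a and \<epsilon> :: real
  assumes "convex_body \<Omega>"
    and "is_incentre \<Omega> c"
    and "0 \<le> \<epsilon>" and "\<epsilon> \<le> inradius \<Omega>"
  shows "inner_nbhd \<epsilon> \<Omega> \<subseteq>
           \<Omega> - interior (enlarge c (1 - \<epsilon> / inradius \<Omega>) \<Omega>)"
proof
  fix x assume xN: "x \<in> inner_nbhd \<epsilon> \<Omega>"
  have cv: "convex \<Omega>" and cl: "closed \<Omega>" using assms(1) by (auto simp: convex_body_def)
  have cO: "c \<in> \<Omega>" and cmax: "\<And>x. x \<in> \<Omega> \<Longrightarrow> infdist x (frontier \<Omega>) \<le> infdist c (frontier \<Omega>)"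
    using assms(2) by (auto simp: is_incentre_def)
  define r where "r = inradius \<Omega>"
  have r: "r = infdist c (frontier \<Omega>)"
    unfolding r_def inradius_def
    by (rule cSup_eq_maximum) (use cO cmax in auto)
  from xN have xO: "x \<in> \<Omega>" and "\<exists>y\<in>frontier \<Omega>. norm (x - y) \<le> \<epsilon>" by (auto simp: inner_nbhd_def)
  then obtain y where yF: "y \<in> frontier \<Omega>" and xy: "norm (x - y) \<le> \<epsilon>" by blast
  have yint: "y \<notin> interior \<Omega>" using yF by (simp add: frontier_def)
  have ballsub: "ball c r \<subseteq> \<Omega>"
  proof
    fix p assume p: "p \<in> ball c r"
    show "p \<in> \<Omega>"
    proof (rule ccontr)
      assume "p \<notin> \<Omega>"
      then have "ball c r \<inter> frontier \<Omega> \<noteq> {}"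
      proof (intro connected_Int_frontier)
        have "0 < r" using p by (metis dist_not_less_zero mem_ball order.strict_trans1 not_le)
        then have "c \<in> ball c r" by simp
        then show "ball c r \<inter> \<Omega> \<noteq> {}" using cO by blast
      qed (use p \<open>p \<notin> \<Omega>\<close> in auto)
      then obtain q where q: "q \<in> ball c r" "q \<in> frontier \<Omega>" by blast
      have "infdist c (frontier \<Omega>) \<le> dist c q" using q(2) by (rule infdist_le)
      then show False using q(1) r by simp
    qed
  qed
  show "x \<in> \<Omega> - interior (enlarge c (1 - \<epsilon> / inradius \<Omega>) \<Omega>)"
  proof (cases "\<epsilon> = 0")
    case True
    then have "x = y" using xy by simp
    then show ?thesis using xO yint True by (simp add: enlarge_def)
  next
    case False
    then have ep: "\<epsilon> > 0" using assms(3) by simp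
    then have rp: "r > 0" using assms(4) r_def by simp
    define l where "l = 1 - \<epsilon> / r"
    have l1: "l < 1" using ep rp by (simp add: l_def)
    have l0: "0 \<le> l" using assms(4) rp by (simp add: l_def r_def field_simps)
    show ?thesis
    proof (cases "l = 0")
      case True
      have "enlarge c l \<Omega> = {c}" using True cO by (auto simp: enlarge_def)
      then show ?thesis using xO True by (simp add: l_def r_def)
    next
      case False
      then have lp: "l > 0" using l0 by simp
      show ?thesis
      proof (rule ccontr)
        assume "\<not> ?thesis"
        then have "x \<in> enlarge c l (interior \<Omega>)"
          using xO interior_enlarge[OF False, of c \<Omega>] by (simp add: l_def r_def)
        then obtain w where w: "w \<in> interior \<Omega>" and xw: "x = c + l *\<^sub>R (w - c)"
          by (auto simp: enlarge_def)
        define z where "z = c + (1 / (1 - l)) *\<^sub>R (y - x)"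
        have oml: "1 - l = \<epsilon> / r" by (simp add: l_def)
        have "norm (z - c) = (r / \<epsilon>) * norm (y - x)"
          using ep rp by (simp add: z_def oml)
        also have "\<dots> \<le> (r / \<epsilon>) * \<epsilon>"
          using xy ep rp by (intro mult_left_mono) (auto simp: norm_minus_commute)
        also have "\<dots> = r" using ep by simp
        finally have "z \<in> cball c r" by (simp add: dist_norm norm_minus_commute)
        then have "z \<in> closure \<Omega>"
          using closure_mono[OF ballsub] rp by auto
        then have "z - l *\<^sub>R (z - w) \<in> interior \<Omega>"
          using mem_interior_closure_convex_shrink[OF cv w, of z l] lp l1 by simp
        moreover have "z - l *\<^sub>R (z - w) = y"
        proof -
          have "(1 - l) *\<^sub>R z = (1 - l) *\<^sub>R c + (y - x)"
            using l1 by (simp add: z_def algebra_simps)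
          then show ?thesis using xw by (simp add: algebra_simps)
        qed
        ultimately show False using yint by simp
      qed
    qed
  qed
qed

end
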